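(* For each $\beta\in(0,1]$ there exists $\Lambda>0$ such that on the domain $\{0<\lambda\le\Lambda\}\subset\mathbb{R}$ the system $$\mathbf{\Omega}(\lambda)=\mathbf{D}(0,\lambda)^\dagger-\Gamma_\beta\int_0^1\frac{\mathbf{D}\mathbf{N}(\mathbf{\Omega}(\lambda(1-w)^\beta))}{(1-w)^{2\beta}}\,dw^\beta$$ has a unique solution $\mathbf{\Omega}(\lambda)=(\Omega_1(\lambda),\Omega_2(\lambda))^\dagger$ in the class of vector-functions with non-negative continuous components.
   Context: $\mathbf{D}=(D_{ij})_{i,j=1}^2$ is a fixed $2\times2$ matrix with positive entries, $\mathbf{N}(\mathbf{x})=(N_1(\mathbf{x}),N_2(\mathbf{x}))^\dagger$ with $N_i(\mathbf{x})=\frac12\sum_{j,k=1}^2b^i_{jk}x_jx_k$ for fixed nonnegative finite constants $b^i_{jk}=b^i_{kj}$ (in the paper these are the second factorial moments of the offspring laws of a two-type branching process, and $\mathbf{D}$ is the matrix defined there from the mean offspring matrix and mean life-lengths). $\Gamma_\beta=1$ if $\beta=1$ and $\Gamma_\beta=\frac{\sin\pi\beta}{\pi\beta(1-\beta)}$ if $\beta\in(0,1)$. *)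

theory Defs
  imports "HOL-Analysis.Analysis"
begin

(* Indices of types are 1 and 2; vectors are functions nat => real restricted to {1,2},
   D :: nat => nat => real is the matrix (D i j), b i j k is b^i_{jk}. *)

definition Gamma_beta :: "real \<Rightarrow> real" where
  "Gamma_beta \<beta> = (if \<beta> = 1 then 1 else sin (pi * \<beta>) / (pi * \<beta> * (1 - \<beta>)))"

definition Nvec :: "(nat \<Rightarrow> nat \<Rightarrow> nat \<Rightarrow> real) \<Rightarrow> (nat \<Rightarrow> real) \<Rightarrow> nat \<Rightarrow> real" where
  "Nvec b x i = (1/2) * (\<Sum>j\<in>{1,2}. \<Sum>k\<in>{1,2}. b i j k * x j * x k)"

definition DN :: "(nat \<Rightarrow> nat \<Rightarrow> real) \<Rightarrow> (nat \<Rightarrow> nat \<Rightarrow> nat \<Rightarrow> real) \<Rightarrow> (nat \<Rightarrow> real) \<Rightarrow> nat \<Rightarrow> real" where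
  "DN D b x i = (\<Sum>j\<in>{1,2}. D i j * Nvec b x j)"

(* integrand (w.r.t. Lebesgue measure dw on (0,1)) of the i-th component, with
   d(w^beta) = beta * w^(beta-1) dw *)
definition integrand :: "(nat \<Rightarrow> nat \<Rightarrow> real) \<Rightarrow> (nat \<Rightarrow> nat \<Rightarrow> nat \<Rightarrow> real) \<Rightarrow> real
    \<Rightarrow> (real \<Rightarrow> nat \<Rightarrow> real) \<Rightarrow> real \<Rightarrow> nat \<Rightarrow> real \<Rightarrow> real" where
  "integrand D b \<beta> \<Omega> l i w =
     DN D b (\<Omega> (l * (1 - w) powr \<beta>)) i / (1 - w) powr (2 * \<beta>) * (\<beta> * w powr (\<beta> - 1))"

definition is_solution :: "(nat \<Rightarrow> nat \<Rightarrow> real) \<Rightarrow> (nat \<Rightarrow> nat \<Rightarrow> nat \<Rightarrow> real) \<Rightarrow> real \<Rightarrow> real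
    \<Rightarrow> (real \<Rightarrow> nat \<Rightarrow> real) \<Rightarrow> bool" where
  "is_solution D b \<beta> \<Lambda> \<Omega> \<longleftrightarrow>
     (\<forall>i\<in>{1,2}. continuous_on {0<..\<Lambda>} (\<lambda>l. \<Omega> l i) \<and> (\<forall>l\<in>{0<..\<Lambda>}. 0 \<le> \<Omega> l i)) \<and>
     (\<forall>l\<in>{0<..\<Lambda>}. \<forall>i\<in>{1,2}.
        set_integrable lborel {0<..<1} (integrand D b \<beta> \<Omega> l i) \<and>
        \<Omega> l i = D i 2 * l - Gamma_beta \<beta> * (LINT w:{0<..<1}|lborel. integrand D b \<beta> \<Omega> l i w))"

end

theory Submission
  imports Defs
begin


lemma weight:
  fixes \<beta> :: real
  assumes "0 < \<beta>"
  shows "set_integrable lborel {0<..<1::real} (\<lambda>w. \<beta> * w powr (\<beta> - 1))"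
    and "(LINT w:{0<..<1}|lborel. \<beta> * w powr (\<beta> - 1)) = 1"
proof -
  have e: "einterval 0 1 = {0<..<1::real}" by (simp add: zero_ereal_def one_ereal_def)
  have F: "\<And>x. 0 < ereal x \<Longrightarrow> ereal x < 1 \<Longrightarrow> DERIV (\<lambda>x. x powr \<beta>) x :> \<beta> * x powr (\<beta> - 1)"
    by (rule has_real_derivative_powr) auto
  have f: "\<And>x. 0 < ereal x \<Longrightarrow> ereal x < 1 \<Longrightarrow> isCont (\<lambda>w. \<beta> * w powr (\<beta> - 1)) x"
    by (auto intro!: continuous_intros)
  have nn: "AE x in lborel. 0 < ereal x \<longrightarrow> ereal x < 1 \<longrightarrow> 0 \<le> \<beta> * x powr (\<beta> - 1)"
    using assms by auto
  have A: "(((\<lambda>x. x powr \<beta>) \<circ> real_of_ereal) \<longlongrightarrow> 0) (at_right 0)"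
    unfolding zero_ereal_def ereal_tendsto_simps
    using assms by (auto intro!: tendsto_eq_intros eventually_at_rightI[of 0 1])
  have B: "(((\<lambda>x. x powr \<beta>) \<circ> real_of_ereal) \<longlongrightarrow> 1) (at_left 1)"
    unfolding one_ereal_def ereal_tendsto_simps
    using assms by (auto intro!: tendsto_eq_intros)
  note r = interval_integral_FTC_nonneg[OF _ F f nn A B]
  show "set_integrable lborel {0<..<1::real} (\<lambda>w. \<beta> * w powr (\<beta> - 1))"
    using r(1) e by simp
  show "(LINT w:{0<..<1}|lborel. \<beta> * w powr (\<beta> - 1)) = 1"
    using r(2) e by (simp add: interval_lebesgue_integral_def one_ereal_def zero_ereal_def)
qed


lemma wint:
  fixes \<beta> C :: real and f :: "real \<Rightarrow> real"
  assumes b: "0 < \<beta>" and fm: "f \<in> borel_measurable borel"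
    and fb: "\<And>w. w \<in> {0<..<1} \<Longrightarrow> \<bar>f w\<bar> \<le> C"
  shows "set_integrable lborel {0<..<1::real} (\<lambda>w. f w * (\<beta> * w powr (\<beta> - 1)))"
    and "\<bar>LINT w:{0<..<1}|lborel. f w * (\<beta> * w powr (\<beta> - 1))\<bar> \<le> C"
proof -
  note W = weight[OF b]
  have rm: "set_borel_measurable lborel {0<..<1::real} (\<lambda>w. f w * (\<beta> * w powr (\<beta> - 1)))"
    using fm unfolding set_borel_measurable_def by measurable
  have nn: "0 \<le> \<beta> * w powr (\<beta> - 1)" for w using b by simp
  have fb2: "\<And>w. w \<in> {0<..<1} \<Longrightarrow> f w \<le> C \<and> -C \<le> f w" using fb by (meson abs_le_D1 abs_le_D2 minus_le_iff)
  show I: "set_integrable lborel {0<..<1::real} (\<lambda>w. f w * (\<beta> * w powr (\<beta> - 1)))"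
  proof (rule set_integrable_bound[OF _ rm])
    show "set_integrable lborel {0<..<1::real} (\<lambda>w. C * (\<beta> * w powr (\<beta> - 1)))"
      using W(1) by simp
    show "AE x in lborel. x \<in> {0<..<1} \<longrightarrow> norm (f x * (\<beta> * x powr (\<beta> - 1))) \<le> norm (C * (\<beta> * x powr (\<beta> - 1)))"
      using fb nn b by (auto simp: abs_mult intro!: mult_right_mono AE_I2 order_trans[OF _ abs_ge_self])
  qed
  have IC: "set_integrable lborel {0<..<1::real} (\<lambda>w. C * (\<beta> * w powr (\<beta> - 1)))"
    and IC': "set_integrable lborel {0<..<1::real} (\<lambda>w. (-C) * (\<beta> * w powr (\<beta> - 1)))"
    using set_integrable_mult_right[OF W(1), of C] set_integrable_mult_right[OF W(1), of "-C"] by simp_all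
  have "(LINT w:{0<..<1}|lborel. f w * (\<beta> * w powr (\<beta> - 1))) \<le> (LINT w:{0<..<1}|lborel. C * (\<beta> * w powr (\<beta> - 1)))"
    by (rule set_integral_mono[OF I IC]) (use fb2 nn in \<open>auto intro!: mult_right_mono\<close>)
  moreover have "(LINT w:{0<..<1}|lborel. (-C) * (\<beta> * w powr (\<beta> - 1))) \<le> (LINT w:{0<..<1}|lborel. f w * (\<beta> * w powr (\<beta> - 1)))"
    by (rule set_integral_mono[OF IC' I]) (use fb2 nn in \<open>metis mult_right_mono\<close>)
  ultimately show "\<bar>LINT w:{0<..<1}|lborel. f w * (\<beta> * w powr (\<beta> - 1))\<bar> \<le> C"
    using W(2) set_integral_mult_right[where a=C and M=lborel and A="{0<..<1::real}" and f="\<lambda>w. \<beta> * w powr (\<beta> - 1)"]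
      set_integral_mult_right[where a="-C" and M=lborel and A="{0<..<1::real}" and f="\<lambda>w. \<beta> * w powr (\<beta> - 1)"]
    by (simp only:)
qed


definition KK :: "(nat \<Rightarrow> nat \<Rightarrow> real) \<Rightarrow> (nat \<Rightarrow> nat \<Rightarrow> nat \<Rightarrow> real) \<Rightarrow> real" where
  "KK D b = (\<Sum>i\<in>{1,2}. \<Sum>j\<in>{1,2}. D i j * (\<Sum>k\<in>{1,2}. \<Sum>l\<in>{1,2}. b j k l)) + 1"

lemma prod_diff_bound:
  fixes a c u v R \<delta> :: real
  assumes "\<bar>a\<bar> \<le> R" "\<bar>c\<bar> \<le> R" "\<bar>u\<bar> \<le> R" "\<bar>v\<bar> \<le> R" "\<bar>a - u\<bar> \<le> \<delta>" "\<bar>c - v\<bar> \<le> \<delta>"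
  shows "\<bar>a * c - u * v\<bar> \<le> 2 * R * \<delta>"
proof -
  have "a * c - u * v = a * (c - v) + v * (a - u)" by algebra
  hence "\<bar>a * c - u * v\<bar> \<le> \<bar>a\<bar> * \<bar>c - v\<bar> + \<bar>v\<bar> * \<bar>a - u\<bar>" by (simp add: abs_mult abs_triangle_ineq[THEN order_trans])
  also have "\<dots> \<le> R * \<delta> + R * \<delta>"
    using assms by (intro add_mono mult_mono) auto
  finally show ?thesis by simp
qed

lemma Nvec_lip:
  assumes bn: "\<forall>i\<in>{1,2}. \<forall>j\<in>{1,2}. \<forall>k\<in>{1,2}. 0 \<le> b i j k"
    and xy: "\<forall>k\<in>{1,2::nat}. \<bar>x k\<bar> \<le> R \<and> \<bar>y k\<bar> \<le> R \<and> \<bar>x k - y k\<bar> \<le> \<delta>"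
    and j: "j \<in> {1,2}"
  shows "\<bar>Nvec b x j - Nvec b y j\<bar> \<le> (\<Sum>k\<in>{1,2}. \<Sum>l\<in>{1,2}. b j k l) * (R * \<delta>)"
proof -
  have "Nvec b x j - Nvec b y j = (1/2) * (\<Sum>k\<in>{1,2}. \<Sum>l\<in>{1,2}. b j k l * (x k * x l - y k * y l))"
    unfolding Nvec_def by (simp add: algebra_simps sum_subtractf[symmetric])
  also have "\<bar>\<dots>\<bar> \<le> (1/2) * (\<Sum>k\<in>{1,2}. \<Sum>l\<in>{1,2}. b j k l * (2 * R * \<delta>))"
  proof -
    have "\<bar>\<Sum>k\<in>{1,2}. \<Sum>l\<in>{1,2}. b j k l * (x k * x l - y k * y l)\<bar> \<le> (\<Sum>k\<in>{1,2}. \<Sum>l\<in>{1,2::nat}. b j k l * (2 * R * \<delta>))"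
    proof (rule order_trans[OF sum_abs], rule sum_mono)
      fix k :: nat assume k: "k \<in> {1,2}"
      show "\<bar>\<Sum>l\<in>{1,2}. b j k l * (x k * x l - y k * y l)\<bar> \<le> (\<Sum>l\<in>{1,2::nat}. b j k l * (2 * R * \<delta>))"
      proof (rule order_trans[OF sum_abs], rule sum_mono)
        fix l :: nat assume l: "l \<in> {1,2}"
        have "\<bar>x k * x l - y k * y l\<bar> \<le> 2 * R * \<delta>"
          using xy k l by (intro prod_diff_bound) auto
        thus "\<bar>b j k l * (x k * x l - y k * y l)\<bar> \<le> b j k l * (2 * R * \<delta>)"
        proof -
          have "0 \<le> b j k l" using bn j k l by blast
          thus ?thesis using \<open>\<bar>x k * x l - y k * y l\<bar> \<le> 2 * R * \<delta>\<close> by (simp add: abs_mult mult_left_mono)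
        qed
      qed
    qed
    thus ?thesis by (simp add: abs_mult)
  qed
  also have "\<dots> = (\<Sum>k\<in>{1,2}. \<Sum>l\<in>{1,2}. b j k l) * (R * \<delta>)"
    by (simp add: sum_distrib_right algebra_simps)
  finally show ?thesis .
qed

lemma DN_lip:
  assumes Dn: "\<forall>i\<in>{1,2}. \<forall>j\<in>{1,2}. 0 < D i j"
    and bn: "\<forall>i\<in>{1,2}. \<forall>j\<in>{1,2}. \<forall>k\<in>{1,2}. 0 \<le> b i j k"
    and xy: "\<forall>k\<in>{1,2::nat}. \<bar>x k\<bar> \<le> R \<and> \<bar>y k\<bar> \<le> R \<and> \<bar>x k - y k\<bar> \<le> \<delta>"
    and i: "i \<in> {1,2}"
  shows "\<bar>DN D b x i - DN D b y i\<bar> \<le> KK D b * (R * \<delta>)"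
proof -
  have Rd: "0 \<le> R * \<delta>" using xy by (metis abs_ge_zero insertI1 mult_nonneg_nonneg order_trans)
  have "DN D b x i - DN D b y i = (\<Sum>j\<in>{1,2}. D i j * (Nvec b x j - Nvec b y j))"
    unfolding DN_def by (simp add: algebra_simps)
  also have "\<bar>\<dots>\<bar> \<le> (\<Sum>j\<in>{1,2}. D i j * ((\<Sum>k\<in>{1,2}. \<Sum>l\<in>{1,2}. b j k l) * (R * \<delta>)))"
  proof (rule order_trans[OF sum_abs], rule sum_mono)
    fix j :: nat assume j: "j \<in> {1,2}"
    show "\<bar>D i j * (Nvec b x j - Nvec b y j)\<bar> \<le> D i j * ((\<Sum>k\<in>{1,2}. \<Sum>l\<in>{1,2}. b j k l) * (R * \<delta>))"
    proof -
      have "0 \<le> D i j" using Dn i j by (meson less_imp_le)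
      thus ?thesis using Nvec_lip[OF bn xy j] by (simp add: abs_mult mult_left_mono)
    qed
  qed
  also have "\<dots> = (\<Sum>j\<in>{1,2}. D i j * (\<Sum>k\<in>{1,2}. \<Sum>l\<in>{1,2}. b j k l)) * (R * \<delta>)"
    by (simp add: sum_distrib_right algebra_simps)
  also have "\<dots> \<le> KK D b * (R * \<delta>)"
  proof (rule mult_right_mono[OF _ Rd])
    have nn: "\<And>i. i \<in> {1,2} \<Longrightarrow> 0 \<le> (\<Sum>j\<in>{1,2}. D i j * (\<Sum>k\<in>{1,2}. \<Sum>l\<in>{1,2::nat}. b j k l))"
      using Dn bn by (intro sum_nonneg mult_nonneg_nonneg) auto
    have "(\<Sum>j\<in>{1,2}. D i j * (\<Sum>k\<in>{1,2}. \<Sum>l\<in>{1,2}. b j k l)) \<le> (\<Sum>i\<in>{1,2}. \<Sum>j\<in>{1,2}. D i j * (\<Sum>k\<in>{1,2}. \<Sum>l\<in>{1,2::nat}. b j k l))"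
      using i nn by (intro member_le_sum) auto
    thus "(\<Sum>j\<in>{1,2}. D i j * (\<Sum>k\<in>{1,2}. \<Sum>l\<in>{1,2}. b j k l)) \<le> KK D b" unfolding KK_def by simp
  qed
  finally show ?thesis .
qed

lemma KK_pos:
  assumes Dn: "\<forall>i\<in>{1,2}. \<forall>j\<in>{1,2}. 0 < D i j"
    and bn: "\<forall>i\<in>{1,2}. \<forall>j\<in>{1,2}. \<forall>k\<in>{1,2}. 0 \<le> b i j k"
  shows "0 < KK D b"
proof -
  have "0 \<le> (\<Sum>i\<in>{1,2}. \<Sum>j\<in>{1,2}. D i j * (\<Sum>k\<in>{1,2}. \<Sum>l\<in>{1,2::nat}. b j k l))"
    using Dn bn by (intro sum_nonneg mult_nonneg_nonneg) auto
  thus ?thesis unfolding KK_def by linarith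
qed

lemma DN_nonneg:
  assumes Dn: "\<forall>i\<in>{1,2}. \<forall>j\<in>{1,2}. 0 < D i j"
    and bn: "\<forall>i\<in>{1,2}. \<forall>j\<in>{1,2}. \<forall>k\<in>{1,2}. 0 \<le> b i j k"
    and x: "\<forall>k\<in>{1,2::nat}. 0 \<le> x k" and i: "i \<in> {1,2}"
  shows "0 \<le> DN D b x i"
  unfolding DN_def Nvec_def using Dn bn x i
  by (intro sum_nonneg mult_nonneg_nonneg) auto

lemma DN_scale:
  "DN D b (\<lambda>j. s * x j) i = s\<^sup>2 * DN D b x i"
  unfolding DN_def Nvec_def by (simp add: sum_distrib_left algebra_simps power2_eq_square)

lemma DN_zero: "DN D b (\<lambda>j. 0) i = 0"
  unfolding DN_def Nvec_def by simp



definition vec :: "real \<times> real \<Rightarrow> nat \<Rightarrow> real" where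
  "vec p j = (if j = 1 then fst p else snd p)"

definition II :: "(nat \<Rightarrow> nat \<Rightarrow> real) \<Rightarrow> (nat \<Rightarrow> nat \<Rightarrow> nat \<Rightarrow> real) \<Rightarrow> real
    \<Rightarrow> (real \<Rightarrow> real \<times> real) \<Rightarrow> nat \<Rightarrow> real \<Rightarrow> real" where
  "II D b \<beta> G i l = (LINT w:{0<..<1}|lborel. DN D b (vec (G (l * (1 - w) powr \<beta>))) i * (\<beta> * w powr (\<beta> - 1)))"

lemma meas_DN:
  fixes G :: "real \<Rightarrow> real \<times> real" and l \<beta> :: real
  assumes "continuous_on UNIV G"
  shows "(\<lambda>w. DN D b (vec (G (l * (1 - w) powr \<beta>))) i) \<in> borel_measurable borel"
proof -
  have m1: "(\<lambda>s. fst (G s)) \<in> borel_measurable borel"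
    by (rule borel_measurable_continuous_onI) (intro continuous_intros assms)
  have m2: "(\<lambda>s. snd (G s)) \<in> borel_measurable borel"
    by (rule borel_measurable_continuous_onI) (intro continuous_intros assms)
  have a: "(\<lambda>w. l * (1 - w) powr \<beta>) \<in> borel_measurable borel"
    by measurable
  have [measurable]: "(\<lambda>w. vec (G (l * (1 - w) powr \<beta>)) j) \<in> borel_measurable borel" for j
    using measurable_compose[OF a m1] measurable_compose[OF a m2]
    by (cases "j = 1") (simp_all add: vec_def)
  show ?thesis unfolding DN_def Nvec_def by measurable
qed

lemma DN_bounds:
  assumes Dn: "\<forall>i\<in>{1,2}. \<forall>j\<in>{1,2}. 0 < D i j"
    and bn: "\<forall>i\<in>{1,2}. \<forall>j\<in>{1,2}. \<forall>k\<in>{1,2}. 0 \<le> b i j k"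
    and x: "\<forall>k\<in>{1,2::nat}. 0 \<le> x k \<and> x k \<le> R" and i: "i \<in> {1,2}"
  shows "0 \<le> DN D b x i" "DN D b x i \<le> KK D b * (R * R)"
proof -
  show "0 \<le> DN D b x i" using DN_nonneg[OF Dn bn _ i] x by blast
  have "\<bar>DN D b x i - DN D b (\<lambda>j. 0) i\<bar> \<le> KK D b * (R * R)"
    by (rule DN_lip[OF Dn bn _ i]) (use x in auto)
  thus "DN D b x i \<le> KK D b * (R * R)" by (simp add: DN_zero)
qed


lemma set_int_nonneg:
  fixes f :: "real \<Rightarrow> real"
  assumes "\<And>x. x \<in> A \<Longrightarrow> 0 \<le> f x"
  shows "0 \<le> (LINT x:A|lborel. f x)"
  unfolding set_lebesgue_integral_def
  by (rule integral_nonneg_AE) (use assms in \<open>auto simp: indicator_def\<close>)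

lemma II_props:
  fixes G :: "real \<Rightarrow> real \<times> real" and \<beta> l R :: real
  assumes Dn: "\<forall>i\<in>{1,2}. \<forall>j\<in>{1,2}. 0 < D i j"
    and bn: "\<forall>i\<in>{1,2}. \<forall>j\<in>{1,2}. \<forall>k\<in>{1,2}. 0 \<le> b i j k"
    and \<beta>: "0 < \<beta>" and cont: "continuous_on UNIV G"
    and rng: "\<forall>s. \<forall>j\<in>{1,2::nat}. 0 \<le> vec (G s) j \<and> vec (G s) j \<le> R"
    and i: "i \<in> {1,2}"
  shows "set_integrable lborel {0<..<1} (\<lambda>w. DN D b (vec (G (l * (1 - w) powr \<beta>))) i * (\<beta> * w powr (\<beta> - 1)))"
    and "0 \<le> II D b \<beta> G i l" and "II D b \<beta> G i l \<le> KK D b * (R * R)"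
proof -
  have nn: "0 \<le> DN D b (vec (G s)) i" and ub: "DN D b (vec (G s)) i \<le> KK D b * (R * R)" for s
    using DN_bounds[OF Dn bn _ i, of "vec (G s)" R] rng by auto
  have ab: "\<bar>DN D b (vec (G (l * (1 - w) powr \<beta>))) i\<bar> \<le> KK D b * (R * R)" for w
    using nn ub by (simp add: abs_of_nonneg)
  note W = wint[OF \<beta> meas_DN[OF cont] ab]
  show "set_integrable lborel {0<..<1} (\<lambda>w. DN D b (vec (G (l * (1 - w) powr \<beta>))) i * (\<beta> * w powr (\<beta> - 1)))"
    by (rule W(1))
  show "0 \<le> II D b \<beta> G i l" unfolding II_def
    by (rule set_int_nonneg) (use nn \<beta> in auto)
  show "II D b \<beta> G i l \<le> KK D b * (R * R)" using W(2) unfolding II_def by linarith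
qed

lemma II_diff:
  fixes G H :: "real \<Rightarrow> real \<times> real" and \<beta> l l' R d :: real
  assumes Dn: "\<forall>i\<in>{1,2}. \<forall>j\<in>{1,2}. 0 < D i j"
    and bn: "\<forall>i\<in>{1,2}. \<forall>j\<in>{1,2}. \<forall>k\<in>{1,2}. 0 \<le> b i j k"
    and \<beta>: "0 < \<beta>" and cont: "continuous_on UNIV G" "continuous_on UNIV H"
    and rng: "\<forall>s. \<forall>j\<in>{1,2::nat}. 0 \<le> vec (G s) j \<and> vec (G s) j \<le> R"
             "\<forall>s. \<forall>j\<in>{1,2::nat}. 0 \<le> vec (H s) j \<and> vec (H s) j \<le> R"
    and close: "\<And>w. w \<in> {0<..<1} \<Longrightarrow> \<forall>j\<in>{1,2::nat}. \<bar>vec (G (l * (1 - w) powr \<beta>)) j - vec (H (l' * (1 - w) powr \<beta>)) j\<bar> \<le> d"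
    and i: "i \<in> {1,2}"
  shows "\<bar>II D b \<beta> G i l - II D b \<beta> H i l'\<bar> \<le> KK D b * (R * d)"
proof -
  note I1 = II_props(1)[OF Dn bn \<beta> cont(1) rng(1) i, of l]
  note I2 = II_props(1)[OF Dn bn \<beta> cont(2) rng(2) i, of l']
  have eq: "II D b \<beta> G i l - II D b \<beta> H i l' = (LINT w:{0<..<1}|lborel.
      (DN D b (vec (G (l * (1 - w) powr \<beta>))) i - DN D b (vec (H (l' * (1 - w) powr \<beta>))) i) * (\<beta> * w powr (\<beta> - 1)))"
    unfolding II_def using set_integral_diff(2)[OF I1 I2] by (simp add: left_diff_distrib)
  have m: "(\<lambda>w. DN D b (vec (G (l * (1 - w) powr \<beta>))) i - DN D b (vec (H (l' * (1 - w) powr \<beta>))) i) \<in> borel_measurable borel"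
    using meas_DN[OF cont(1)] meas_DN[OF cont(2)] by measurable
  have b: "\<bar>DN D b (vec (G (l * (1 - w) powr \<beta>))) i - DN D b (vec (H (l' * (1 - w) powr \<beta>))) i\<bar> \<le> KK D b * (R * d)"
    if w: "w \<in> {0<..<1}" for w
    by (rule DN_lip[OF Dn bn _ i]) (use rng close[OF w] in \<open>auto\<close>)
  show ?thesis unfolding eq by (rule wint(2)[OF \<beta> m b])
qed


lemma cont_apply_bcontfun: "continuous_on UNIV (\<lambda>g::'a::topological_space \<Rightarrow>\<^sub>C 'b::metric_space. apply_bcontfun g x)"
  unfolding continuous_on_iff
  by (metis dist_fun_lt_imp_dist_val_lt)

lemma cont_vec_apply: "continuous_on UNIV (\<lambda>g::'a::topological_space \<Rightarrow>\<^sub>C (real \<times> real). vec (apply_bcontfun g x) j)"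
  unfolding vec_def
  by (cases "j = 1") (auto intro!: continuous_intros cont_apply_bcontfun)

lemma vec_dist: "\<bar>vec p j - vec q j\<bar> \<le> dist p q"
proof -
  have "\<bar>fst p - fst q\<bar> \<le> dist p q" "\<bar>snd p - snd q\<bar> \<le> dist p q"
  proof -
    have e: "p - q = (fst p - fst q, snd p - snd q)" by (simp add: prod_eq_iff)
    show "\<bar>fst p - fst q\<bar> \<le> dist p q" "\<bar>snd p - snd q\<bar> \<le> dist p q"
      using norm_fst_le[of "fst p - fst q" "snd p - snd q"] norm_snd_le[of "snd p - snd q" "fst p - fst q"]
      unfolding dist_norm by (subst e; simp)+
  qed
  thus ?thesis unfolding vec_def by auto
qed

lemma dist_by_vec:
  assumes "\<bar>fst p - fst q\<bar> \<le> e" "\<bar>snd p - snd q\<bar> \<le> e"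
  shows "dist p q \<le> 2 * e"
proof -
  have e: "p - q = (fst p - fst q, snd p - snd q)" by (simp add: prod_eq_iff)
  have "dist p q = norm (fst p - fst q, snd p - snd q)" unfolding dist_norm by (subst e) simp
  also have "\<dots> \<le> norm (fst p - fst q) + norm (snd p - snd q)" by (rule norm_Pair_le)
  finally show ?thesis using assms by simp
qed


lemma vec12: "vec p 1 = fst p" "vec p 2 = snd p" "vec p (Suc 0) = fst p" by (simp_all add: vec_def)

lemma P_cont:
  fixes g :: "real \<Rightarrow> real \<times> real"
  assumes lip: "\<forall>s t. \<forall>j\<in>{1,2::nat}. \<bar>vec (g s) j - vec (g t) j\<bar> \<le> L * \<bar>s - t\<bar>" and L: "0 \<le> L"
  shows "continuous_on UNIV g"
proof (rule lipschitz_on_continuous_on)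
  show "(2 * L)-lipschitz_on UNIV g"
  proof (rule lipschitz_onI)
    fix x y :: real
    have "dist (g x) (g y) \<le> 2 * (L * \<bar>x - y\<bar>)"
      by (rule dist_by_vec) (use lip in \<open>auto simp: vec12[symmetric]\<close>)
    thus "dist (g x) (g y) \<le> 2 * L * dist x y" by (simp add: dist_real_def)
  qed (use L in auto)
qed

lemma P_bcontfun:
  fixes g :: "real \<Rightarrow> real \<times> real"
  assumes rng: "\<forall>s. \<forall>j\<in>{1,2::nat}. 0 \<le> vec (g s) j \<and> vec (g s) j \<le> R"
    and lip: "\<forall>s t. \<forall>j\<in>{1,2::nat}. \<bar>vec (g s) j - vec (g t) j\<bar> \<le> L * \<bar>s - t\<bar>" and L: "0 \<le> L"
  shows "g \<in> bcontfun"
proof (rule bcontfun_normI[OF P_cont[OF lip L]])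
  fix x
  have a: "0 \<le> vec (g x) 1 \<and> vec (g x) 1 \<le> R" "0 \<le> vec (g x) 2 \<and> vec (g x) 2 \<le> R" using rng by auto
  have "norm (g x) = norm (fst (g x), snd (g x))" by simp
  also have "\<dots> \<le> norm (fst (g x)) + norm (snd (g x))" by (rule norm_Pair_le)
  also have "\<dots> \<le> R + R" using a by (simp add: vec12)
  finally show "norm (g x) \<le> R + R" .
qed


lemma existence:
  fixes D :: "nat \<Rightarrow> nat \<Rightarrow> real" and b :: "nat \<Rightarrow> nat \<Rightarrow> nat \<Rightarrow> real" and \<beta> \<Gamma> R \<Lambda> :: real
  assumes Dn: "\<forall>i\<in>{1,2}. \<forall>j\<in>{1,2}. 0 < D i j"
    and bn: "\<forall>i\<in>{1,2}. \<forall>j\<in>{1,2}. \<forall>k\<in>{1,2}. 0 \<le> b i j k"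
    and \<beta>: "0 < \<beta>" and \<Gamma>: "0 \<le> \<Gamma>" and R: "D 1 2 \<le> R" "D 2 2 \<le> R" and \<Lambda>: "0 < \<Lambda>"
    and h1: "\<Gamma> * \<Lambda> * KK D b * R \<le> 1/4"
    and h2: "\<Gamma> * \<Lambda> * (KK D b * (R * R)) \<le> D 1 2" "\<Gamma> * \<Lambda> * (KK D b * (R * R)) \<le> D 2 2"
  shows "\<exists>g::real\<Rightarrow>real\<times>real. continuous_on UNIV g \<and> (\<forall>s. \<forall>j\<in>{1,2::nat}. 0 \<le> vec (g s) j \<and> vec (g s) j \<le> R) \<and>
     (\<forall>l\<in>{0..\<Lambda>}. \<forall>i\<in>{1,2::nat}. vec (g l) i = D i 2 - \<Gamma> * l * II D b \<beta> g i l)"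
proof -
  define K where "K = KK D b"
  have K: "0 < K" unfolding K_def by (rule KK_pos[OF Dn bn])
  have D12: "0 < D 1 2" "0 < D 2 2" using Dn by auto
  have R0: "0 < R" using R D12 by linarith
  define c where "c x = max 0 (min \<Lambda> x)" for x :: real
  have c0: "0 \<le> c x" "c x \<le> \<Lambda>" for x unfolding c_def using \<Lambda> by auto
  have cl: "\<bar>c x - c y\<bar> \<le> \<bar>x - y\<bar>" for x y unfolding c_def by (auto simp: abs_if)
  have cid: "x \<in> {0..\<Lambda>} \<Longrightarrow> c x = x" for x unfolding c_def by auto
  define Tf where "Tf g x = (D 1 2 - \<Gamma> * c x * II D b \<beta> g 1 (c x), D 2 2 - \<Gamma> * c x * II D b \<beta> g 2 (c x))"
    for g :: "real \<Rightarrow> real \<times> real" and x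
  have Tf_vec: "vec (Tf g x) i = D i 2 - \<Gamma> * c x * II D b \<beta> g i (c x)" if "i \<in> {1,2}" for g x i
    using that unfolding Tf_def vec_def by auto
  define L where "L = 2 * \<Gamma> * K * (R * R) + 1"
  have L: "0 < L" unfolding L_def using \<Gamma> K by (simp add: add_nonneg_pos)
  define P where "P g \<longleftrightarrow> (\<forall>s. \<forall>j\<in>{1,2::nat}. 0 \<le> vec (g s) j \<and> vec (g s) j \<le> R) \<and>
      (\<forall>s t. \<forall>j\<in>{1,2::nat}. \<bar>vec (g s) j - vec (g t) j\<bar> \<le> L * \<bar>s - t\<bar>)" for g :: "real \<Rightarrow> real \<times> real"
  have TfP: "P (Tf g)" if cg: "continuous_on UNIV g" and Pg: "P g" for g
  proof -
    have rng: "\<forall>s. \<forall>j\<in>{1,2::nat}. 0 \<le> vec (g s) j \<and> vec (g s) j \<le> R" using Pg unfolding P_def by blast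
    have lip: "\<forall>s t. \<forall>j\<in>{1,2::nat}. \<bar>vec (g s) j - vec (g t) j\<bar> \<le> L * \<bar>s - t\<bar>" using Pg unfolding P_def by blast
    have Ib: "0 \<le> II D b \<beta> g i l" "II D b \<beta> g i l \<le> K * (R * R)" if "i \<in> {1,2}" for i l
      using II_props(2,3)[OF Dn bn \<beta> cg rng that] unfolding K_def by auto
    have range: "0 \<le> vec (Tf g x) i \<and> vec (Tf g x) i \<le> R" if i: "i \<in> {1,2}" for x i
    proof -
      have a: "0 \<le> \<Gamma> * c x * II D b \<beta> g i (c x)" using \<Gamma> c0 Ib[OF i] by simp
      have "\<Gamma> * c x * II D b \<beta> g i (c x) \<le> \<Gamma> * \<Lambda> * (K * (R * R))"
        using \<Gamma> \<Lambda> c0 Ib[OF i] by (intro mult_mono) auto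
      hence "\<Gamma> * c x * II D b \<beta> g i (c x) \<le> D i 2" using h2 i unfolding K_def by auto
      moreover have "D i 2 \<le> R" using R i by auto
      ultimately show ?thesis using a Tf_vec[OF i] by simp
    qed
    have lipT: "\<bar>vec (Tf g s) i - vec (Tf g t) i\<bar> \<le> L * \<bar>s - t\<bar>" if i: "i \<in> {1,2}" for s t i
    proof -
      define a where "a = c s"
      define a' where "a' = c t"
      define \<delta> where "\<delta> = \<bar>a - a'\<bar>"
      have \<delta>: "0 \<le> \<delta>" "\<delta> \<le> \<bar>s - t\<bar>" unfolding \<delta>_def a_def a'_def using cl by auto
      have a0: "0 \<le> a" "a \<le> \<Lambda>" "0 \<le> a'" unfolding a_def a'_def using c0 by auto
      have Id: "\<bar>II D b \<beta> g i a - II D b \<beta> g i a'\<bar> \<le> K * (R * (L * \<delta>))"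
        unfolding K_def
      proof (rule II_diff[OF Dn bn \<beta> cg cg rng rng _ i])
        fix w :: real assume w: "w \<in> {0<..<1}"
        have p: "0 \<le> (1 - w) powr \<beta>" "(1 - w) powr \<beta> \<le> 1" using w \<beta> by (auto intro!: powr_le1)
        have "\<bar>a * (1 - w) powr \<beta> - a' * (1 - w) powr \<beta>\<bar> = \<delta> * (1 - w) powr \<beta>"
          unfolding \<delta>_def using p by (simp add: left_diff_distrib[symmetric] abs_mult)
        also have "\<dots> \<le> \<delta>" using p \<delta> by (simp add: mult_left_le)
        finally have "\<bar>a * (1 - w) powr \<beta> - a' * (1 - w) powr \<beta>\<bar> \<le> \<delta>" .
        thus "\<forall>j\<in>{1,2}. \<bar>vec (g (a * (1 - w) powr \<beta>)) j - vec (g (a' * (1 - w) powr \<beta>)) j\<bar> \<le> L * \<delta>"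
          using lip L by (meson mult_left_mono less_imp_le order_trans)
      qed
      have eq: "vec (Tf g s) i - vec (Tf g t) i = \<Gamma> * ((a' - a) * II D b \<beta> g i a' + a * (II D b \<beta> g i a' - II D b \<beta> g i a))"
        unfolding Tf_vec[OF i] a_def a'_def by (simp add: algebra_simps)
      have t1: "\<bar>(a' - a) * II D b \<beta> g i a'\<bar> \<le> \<delta> * (K * (R * R))"
        unfolding \<delta>_def using Ib[OF i, of a'] by (simp add: abs_mult abs_minus_commute mult_left_mono)
      have t2: "\<bar>a * (II D b \<beta> g i a' - II D b \<beta> g i a)\<bar> \<le> \<Lambda> * (K * (R * (L * \<delta>)))"
        using Id a0 by (simp add: abs_mult abs_minus_commute mult_mono)
      have "\<bar>vec (Tf g s) i - vec (Tf g t) i\<bar> \<le> \<Gamma> * (\<delta> * (K * (R * R)) + \<Lambda> * (K * (R * (L * \<delta>))))"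
        unfolding eq using t1 t2 \<Gamma> by (simp add: abs_mult mult_left_mono abs_triangle_ineq[THEN order_trans] add_mono)
      also have "\<dots> = \<delta> * (\<Gamma> * K * (R * R)) + (\<Gamma> * \<Lambda> * K * R) * (L * \<delta>)" by (simp add: algebra_simps)
      also have "\<dots> \<le> \<delta> * (L / 2) + (1/4) * (L * \<delta>)"
      proof (intro add_mono mult_left_mono mult_right_mono)
        show "\<Gamma> * K * (R * R) \<le> L / 2" unfolding L_def by simp
        show "\<Gamma> * \<Lambda> * K * R \<le> 1/4" using h1 unfolding K_def .
      qed (use \<delta> L in auto)
      also have "\<dots> \<le> L * \<bar>s - t\<bar>" using \<delta> L by (simp add: algebra_simps mult_left_mono)
      finally show ?thesis .
    qed
    show ?thesis unfolding P_def using range lipT by blast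
  qed
  have Pbc: "g \<in> bcontfun" if "P g" for g
    using P_bcontfun[of g R L] that L unfolding P_def by auto
  define S where "S = {g :: real \<Rightarrow>\<^sub>C (real \<times> real). P (apply_bcontfun g)}"
  define T where "T g = Bcontfun (Tf (apply_bcontfun g))" for g :: "real \<Rightarrow>\<^sub>C (real \<times> real)"
  have appT: "apply_bcontfun (T g) = Tf (apply_bcontfun g)" if "g \<in> S" for g
  proof -
    have "P (Tf (apply_bcontfun g))" using TfP[of "apply_bcontfun g"] that unfolding S_def by auto
    thus ?thesis unfolding T_def by (intro Bcontfun_inverse Pbc)
  qed
  have TS: "T ` S \<subseteq> S"
  proof
    fix h assume "h \<in> T ` S"
    then obtain g where g: "g \<in> S" "h = T g" by auto
    show "h \<in> S" using TfP[of "apply_bcontfun g"] g appT[OF g(1)] unfolding S_def by auto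
  qed
  have contr: "dist (T g) (T h) \<le> (1/2) * dist g h" if g: "g \<in> S" and h: "h \<in> S" for g h
  proof (rule dist_bound)
    fix x
    have rg: "\<forall>s. \<forall>j\<in>{1,2::nat}. 0 \<le> vec (g s) j \<and> vec (g s) j \<le> R"
      and rh: "\<forall>s. \<forall>j\<in>{1,2::nat}. 0 \<le> vec (h s) j \<and> vec (h s) j \<le> R"
      using g h unfolding S_def P_def by auto
    have comp: "\<bar>vec (T g x) i - vec (T h x) i\<bar> \<le> (1/4) * dist g h" if i: "i \<in> {1,2}" for i
    proof -
      have Id: "\<bar>II D b \<beta> g i (c x) - II D b \<beta> h i (c x)\<bar> \<le> K * (R * dist g h)"
        unfolding K_def
        by (rule II_diff[OF Dn bn \<beta> continuous_on_apply_bcontfun continuous_on_apply_bcontfun rg rh _ i])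
           (meson vec_dist dist_bounded order_trans)
      have "vec (T g x) i - vec (T h x) i = \<Gamma> * c x * (II D b \<beta> h i (c x) - II D b \<beta> g i (c x))"
        unfolding appT[OF g] appT[OF h] Tf_vec[OF i] by (simp add: algebra_simps)
      hence "\<bar>vec (T g x) i - vec (T h x) i\<bar> = \<Gamma> * c x * \<bar>II D b \<beta> g i (c x) - II D b \<beta> h i (c x)\<bar>"
        using \<Gamma> c0 by (simp add: abs_mult abs_minus_commute)
      also have "\<dots> \<le> \<Gamma> * \<Lambda> * (K * (R * dist g h))"
        using \<Gamma> \<Lambda> c0 Id by (intro mult_mono) auto
      also have "\<dots> = (\<Gamma> * \<Lambda> * K * R) * dist g h" by simp
      also have "\<dots> \<le> (1/4) * dist g h" using h1 unfolding K_def by (intro mult_right_mono) auto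
      finally show ?thesis .
    qed
    have "dist (T g x) (T h x) \<le> 2 * ((1/4) * dist g h)"
      by (rule dist_by_vec) (use comp[of 1] comp[of 2] in \<open>auto simp: vec12\<close>)
    thus "dist (T g x) (T h x) \<le> (1/2) * dist g h" by simp
  qed
  have closedS: "closed S"
  proof -
    have "S = {g. \<forall>s t. (0 \<le> vec (apply_bcontfun g s) 1 \<and> vec (apply_bcontfun g s) 1 \<le> R \<and>
        0 \<le> vec (apply_bcontfun g s) 2 \<and> vec (apply_bcontfun g s) 2 \<le> R \<and>
        \<bar>vec (apply_bcontfun g s) 1 - vec (apply_bcontfun g t) 1\<bar> \<le> L * \<bar>s - t\<bar> \<and>
        \<bar>vec (apply_bcontfun g s) 2 - vec (apply_bcontfun g t) 2\<bar> \<le> L * \<bar>s - t\<bar>)}"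
      unfolding S_def P_def by auto
    also have "closed \<dots>"
      by (intro closed_Collect_all closed_Collect_conj closed_Collect_le continuous_intros cont_vec_apply)
    finally show ?thesis .
  qed
  have Sne: "S \<noteq> {}"
  proof -
    have "P (\<lambda>x. (D 1 2, D 2 2))" unfolding P_def vec_def using D12 R L by auto
    moreover have "apply_bcontfun (const_bcontfun (D 1 2, D 2 2)) = (\<lambda>x. (D 1 2, D 2 2))"
      by (simp add: const_bcontfun.rep_eq)
    ultimately have "const_bcontfun (D 1 2, D 2 2) \<in> S" unfolding S_def by simp
    thus ?thesis by blast
  qed
  obtain g where gS: "g \<in> S" and gfix: "T g = g"
    using Banach_fix[of S "1/2" T] closedS complete_eq_closed Sne TS contr by auto
  define G where "G = apply_bcontfun g"
  have GT: "G = Tf G" using appT[OF gS] gfix unfolding G_def by simp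
  show ?thesis
  proof (intro exI conjI)
    show "continuous_on UNIV G" unfolding G_def by simp
    show "\<forall>s. \<forall>j\<in>{1,2::nat}. 0 \<le> vec (G s) j \<and> vec (G s) j \<le> R"
      using gS unfolding S_def P_def G_def by auto
    show "\<forall>l\<in>{0..\<Lambda>}. \<forall>i\<in>{1,2::nat}. vec (G l) i = D i 2 - \<Gamma> * l * II D b \<beta> G i l"
    proof (intro ballI)
      fix l i assume l: "l \<in> {0..\<Lambda>}" and i: "(i::nat) \<in> {1,2}"
      have "vec (G l) i = vec (Tf G l) i" using GT by metis
      thus "vec (G l) i = D i 2 - \<Gamma> * l * II D b \<beta> G i l" using Tf_vec[OF i] cid[OF l] by simp
    qed
  qed
qed


lemma int_abs_bound:
  fixes h g :: "real \<Rightarrow> real"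
  assumes ih: "set_integrable lborel A h" and ig: "set_integrable lborel A g"
    and b: "\<And>x. x \<in> A \<Longrightarrow> \<bar>h x\<bar> \<le> g x"
  shows "\<bar>LINT x:A|lborel. h x\<bar> \<le> (LINT x:A|lborel. g x)"
proof -
  have ih': "set_integrable lborel A (\<lambda>x. (-1) * h x)" using ih by (intro set_integrable_mult_right) auto
  have "(LINT x:A|lborel. h x) \<le> (LINT x:A|lborel. g x)"
    by (rule set_integral_mono[OF ih ig]) (use b in \<open>auto simp: abs_le_iff\<close>)
  moreover have "(LINT x:A|lborel. (-1) * h x) \<le> (LINT x:A|lborel. g x)"
    by (rule set_integral_mono[OF ih' ig]) (use b in \<open>auto simp: abs_le_iff\<close>)
  ultimately show ?thesis
    using set_integral_mult_right[where a="-1" and M=lborel and A=A and f=h] by (simp only:)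
qed

lemma sol_bound:
  fixes X :: "real \<Rightarrow> nat \<Rightarrow> real"
  assumes Dn: "\<forall>i\<in>{1,2}. \<forall>j\<in>{1,2}. 0 < D i j"
    and bn: "\<forall>i\<in>{1,2}. \<forall>j\<in>{1,2}. \<forall>k\<in>{1,2}. 0 \<le> b i j k"
    and \<beta>: "0 < \<beta>" and \<Gamma>: "0 \<le> Gamma_beta \<beta>" and R: "D 1 2 \<le> R" "D 2 2 \<le> R"
    and sol: "is_solution D b \<beta> \<Lambda> X" and l: "l \<in> {0<..\<Lambda>}" and i: "i \<in> {1,2}"
  shows "0 \<le> X l i \<and> X l i \<le> R * l"
proof -
  have nn: "\<And>s k. s \<in> {0<..\<Lambda>} \<Longrightarrow> k \<in> {1,2} \<Longrightarrow> 0 \<le> X s k"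
    and eq: "X l i = D i 2 * l - Gamma_beta \<beta> * (LINT w:{0<..<1}|lborel. integrand D b \<beta> X l i w)"
    using sol l i unfolding is_solution_def by auto
  have "0 \<le> (LINT w:{0<..<1}|lborel. integrand D b \<beta> X l i w)"
  proof (rule set_int_nonneg)
    fix w :: real assume w: "w \<in> {0<..<1}"
    have p: "0 < (1 - w) powr \<beta>" "(1 - w) powr \<beta> \<le> 1" using w \<beta> by (auto intro!: powr_le1)
    have a: "l * (1 - w) powr \<beta> \<le> l" using l p by (intro mult_left_le) auto
    have s1: "l * (1 - w) powr \<beta> \<le> \<Lambda>" by (rule order_trans[OF a]) (use l in auto)
    have s: "l * (1 - w) powr \<beta> \<in> {0<..\<Lambda>}" using l p s1 by auto
    have "0 \<le> DN D b (X (l * (1 - w) powr \<beta>)) i"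
      by (rule DN_nonneg[OF Dn bn _ i]) (use nn[OF s] in auto)
    moreover have "0 < (1 - w) powr (2 * \<beta>)" using w by auto
    ultimately show "0 \<le> integrand D b \<beta> X l i w" unfolding integrand_def using \<beta> by simp
  qed
  moreover have "D i 2 * l \<le> R * l" using R i l by (auto intro: mult_right_mono)
  ultimately show ?thesis using nn[OF l i] eq mult_nonneg_nonneg[OF \<Gamma>, of "LINT w:{0<..<1}|lborel. integrand D b \<beta> X l i w"]
    by linarith
qed


lemma uniq:
  fixes X Y :: "real \<Rightarrow> nat \<Rightarrow> real"
  assumes Dn: "\<forall>i\<in>{1,2}. \<forall>j\<in>{1,2}. 0 < D i j"
    and bn: "\<forall>i\<in>{1,2}. \<forall>j\<in>{1,2}. \<forall>k\<in>{1,2}. 0 \<le> b i j k"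
    and \<beta>: "0 < \<beta>" and \<Gamma>: "0 \<le> Gamma_beta \<beta>" and R: "D 1 2 \<le> R" "D 2 2 \<le> R"
    and h: "Gamma_beta \<beta> * KK D b * R * \<Lambda> \<le> 1/2"
    and solX: "is_solution D b \<beta> \<Lambda> X" and solY: "is_solution D b \<beta> \<Lambda> Y"
  shows "\<forall>l\<in>{0<..\<Lambda>}. \<forall>i\<in>{1,2}. X l i = Y l i"
proof -
  define \<Gamma>' where "\<Gamma>' = Gamma_beta \<beta>"
  define K where "K = KK D b"
  have K: "0 < K" unfolding K_def by (rule KK_pos[OF Dn bn])
  have R0: "0 \<le> R" using R Dn by force
  note bX = sol_bound[OF Dn bn \<beta> \<Gamma> R solX] and bY = sol_bound[OF Dn bn \<beta> \<Gamma> R solY]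
  have claim: "\<forall>l\<in>{0<..\<Lambda>}. \<forall>i\<in>{1,2}. \<bar>X l i - Y l i\<bar> \<le> R / 2 ^ n * l" for n :: nat
  proof (induction n)
    case 0
    show ?case
    proof (intro ballI)
      fix l i assume l: "l \<in> {0<..\<Lambda>}" and i: "(i::nat) \<in> {1,2}"
      show "\<bar>X l i - Y l i\<bar> \<le> R / 2 ^ 0 * l" using bX[OF l i] bY[OF l i] by (simp add: abs_le_iff)
    qed
  next
    case (Suc n)
    define m where "m = R / 2 ^ n"
    have m0: "0 \<le> m" unfolding m_def using R0 by simp
    show ?case
    proof (intro ballI)
      fix l i assume l: "l \<in> {0<..\<Lambda>}" and i: "(i::nat) \<in> {1,2}"
      have iX: "set_integrable lborel {0<..<1} (integrand D b \<beta> X l i)"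
        and eX: "X l i = D i 2 * l - \<Gamma>' * (LINT w:{0<..<1}|lborel. integrand D b \<beta> X l i w)"
        using solX l i unfolding is_solution_def \<Gamma>'_def by auto
      have iY: "set_integrable lborel {0<..<1} (integrand D b \<beta> Y l i)"
        and eY: "Y l i = D i 2 * l - \<Gamma>' * (LINT w:{0<..<1}|lborel. integrand D b \<beta> Y l i w)"
        using solY l i unfolding is_solution_def \<Gamma>'_def by auto
      have iW: "set_integrable lborel {0<..<1::real} (\<lambda>w. (K * R * m * l\<^sup>2) * (\<beta> * w powr (\<beta> - 1)))"
        using weight(1)[OF \<beta>] by simp
      have vW: "(LINT w:{0<..<1}|lborel. (K * R * m * l\<^sup>2) * (\<beta> * w powr (\<beta> - 1))) = K * R * m * l\<^sup>2"
        using weight(2)[OF \<beta>] by simp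
      have pw: "\<bar>integrand D b \<beta> Y l i w - integrand D b \<beta> X l i w\<bar> \<le> (K * R * m * l\<^sup>2) * (\<beta> * w powr (\<beta> - 1))"
        if w: "w \<in> {0<..<1}" for w
      proof -
        define p where "p = (1 - w) powr \<beta>"
        define s where "s = l * p"
        have p: "0 < p" "p \<le> 1" unfolding p_def using w \<beta> by (auto intro!: powr_le1)
        have a: "s \<le> l" unfolding s_def using l p by (intro mult_left_le) auto
        have s1: "s \<le> \<Lambda>" by (rule order_trans[OF a]) (use l in auto)
        have s: "s \<in> {0<..\<Lambda>}" using l p s1 unfolding s_def by auto
        have q: "(1 - w) powr (2 * \<beta>) = p * p" unfolding p_def using w by (simp add: powr_add[symmetric])
        have lipb: "\<bar>DN D b (Y s) i - DN D b (X s) i\<bar> \<le> K * (R * s * (m * s))"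
          unfolding K_def
        proof (rule DN_lip[OF Dn bn _ i])
          show "\<forall>k\<in>{1,2}. \<bar>Y s k\<bar> \<le> R * s \<and> \<bar>X s k\<bar> \<le> R * s \<and> \<bar>Y s k - X s k\<bar> \<le> m * s"
            using bX[OF s] bY[OF s] Suc.IH s unfolding m_def by (auto simp: abs_minus_commute)
        qed
        have eqi: "integrand D b \<beta> Y l i w - integrand D b \<beta> X l i w
            = (DN D b (Y s) i - DN D b (X s) i) / (p * p) * (\<beta> * w powr (\<beta> - 1))"
          unfolding integrand_def s_def p_def q[unfolded p_def] by (simp add: algebra_simps diff_divide_distrib)
        have rho: "0 \<le> \<beta> * w powr (\<beta> - 1)" using \<beta> by simp
        have "\<bar>(DN D b (Y s) i - DN D b (X s) i) / (p * p)\<bar> \<le> K * (R * s * (m * s)) / (p * p)"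
          using lipb p by (simp add: abs_mult divide_right_mono)
        also have "\<dots> = K * R * m * l\<^sup>2" unfolding s_def using p by (simp add: power2_eq_square field_simps)
        finally have A: "\<bar>(DN D b (Y s) i - DN D b (X s) i) / (p * p)\<bar> \<le> K * R * m * l\<^sup>2" .
        have B: "\<bar>(DN D b (Y s) i - DN D b (X s) i) / (p * p) * (\<beta> * w powr (\<beta> - 1))\<bar>
           = \<bar>(DN D b (Y s) i - DN D b (X s) i) / (p * p)\<bar> * (\<beta> * w powr (\<beta> - 1))"
          by (subst abs_mult) (simp only: abs_of_nonneg[OF rho])
        show ?thesis unfolding eqi B by (rule mult_right_mono[OF A rho])
      qed
      have "\<bar>(LINT w:{0<..<1}|lborel. integrand D b \<beta> Y l i w - integrand D b \<beta> X l i w)\<bar> \<le> K * R * m * l\<^sup>2"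
        using int_abs_bound[OF set_integral_diff(1)[OF iY iX] iW pw] unfolding vW .
      hence J: "\<bar>(LINT w:{0<..<1}|lborel. integrand D b \<beta> Y l i w) - (LINT w:{0<..<1}|lborel. integrand D b \<beta> X l i w)\<bar> \<le> K * R * m * l\<^sup>2"
        using set_integral_diff(2)[OF iY iX] by simp
      have "X l i - Y l i = \<Gamma>' * ((LINT w:{0<..<1}|lborel. integrand D b \<beta> Y l i w) - (LINT w:{0<..<1}|lborel. integrand D b \<beta> X l i w))"
        using eX eY by (simp add: algebra_simps)
      hence "\<bar>X l i - Y l i\<bar> \<le> \<Gamma>' * (K * R * m * l\<^sup>2)"
        using J \<Gamma> unfolding \<Gamma>'_def by (simp add: abs_mult mult_left_mono)
      also have "\<dots> = (\<Gamma>' * K * R * l) * (m * l)" by (simp add: power2_eq_square algebra_simps)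
      also have "\<dots> \<le> (1/2) * (m * l)"
      proof (rule mult_right_mono)
        have "\<Gamma>' * K * R * l \<le> \<Gamma>' * K * R * \<Lambda>"
          using l \<Gamma> K R0 unfolding \<Gamma>'_def by (intro mult_left_mono) auto
        thus "\<Gamma>' * K * R * l \<le> 1/2" using h unfolding \<Gamma>'_def K_def by linarith
      qed (use m0 l in auto)
      also have "\<dots> = R / 2 ^ Suc n * l" unfolding m_def by simp
      finally show "\<bar>X l i - Y l i\<bar> \<le> R / 2 ^ Suc n * l" .
    qed
  qed
  show ?thesis
  proof (intro ballI)
    fix l i assume l: "l \<in> {0<..\<Lambda>}" and i: "(i::nat) \<in> {1,2}"
    show "X l i = Y l i"
    proof (rule ccontr)
      assume ne: "X l i \<noteq> Y l i"
      define e where "e = \<bar>X l i - Y l i\<bar> / (R * l + 1)"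
      have Rl: "0 \<le> R * l" using R0 l by auto
      have e: "0 < e" unfolding e_def using ne Rl by auto
      obtain n where n: "(1/2::real) ^ n < e" using real_arch_pow_inv[OF e, of "1/2"] by auto
      have "R / 2 ^ n * l = (R * l) * (1/2) ^ n" by (simp add: power_divide)
      also have "\<dots> \<le> (R * l + 1) * (1/2) ^ n" by (intro mult_right_mono) auto
      also have "\<dots> < (R * l + 1) * e" using n Rl by (intro mult_strict_left_mono) auto
      also have "\<dots> = \<bar>X l i - Y l i\<bar>" unfolding e_def using Rl by simp
      finally show False using claim[of n] l i by fastforce
    qed
  qed
qed


lemma Gamma_nonneg: assumes "0 < \<beta>" "\<beta> \<le> 1" shows "0 \<le> Gamma_beta \<beta>"
proof (cases "\<beta> = 1")
  case True thus ?thesis by (simp add: Gamma_beta_def)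
next
  case False
  hence b1: "\<beta> < 1" using assms by auto
  have "0 < sin (pi * \<beta>)" using assms b1 by (intro sin_gt_zero) auto
  moreover have "0 < pi * \<beta> * (1 - \<beta>)" using assms b1 by auto
  ultimately show ?thesis using False by (simp add: Gamma_beta_def)
qed

theorem lemma7:
  fixes D :: "nat \<Rightarrow> nat \<Rightarrow> real" and b :: "nat \<Rightarrow> nat \<Rightarrow> nat \<Rightarrow> real"
  assumes D_pos: "\<forall>i\<in>{1,2}. \<forall>j\<in>{1,2}. 0 < D i j"
    and b_nonneg: "\<forall>i\<in>{1,2}. \<forall>j\<in>{1,2}. \<forall>k\<in>{1,2}. 0 \<le> b i j k"
    and b_sym: "\<forall>i\<in>{1,2}. \<forall>j\<in>{1,2}. \<forall>k\<in>{1,2}. b i j k = b i k j"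
    and \<beta>: "0 < \<beta>" "\<beta> \<le> 1"
  shows "\<exists>\<Lambda>>0. \<exists>\<Omega>. is_solution D b \<beta> \<Lambda> \<Omega> \<and>
           (\<forall>\<Omega>'. is_solution D b \<beta> \<Lambda> \<Omega>' \<longrightarrow>
              (\<forall>l\<in>{0<..\<Lambda>}. \<forall>i\<in>{1,2}. \<Omega>' l i = \<Omega> l i))"
proof -
  define \<Gamma> where "\<Gamma> = Gamma_beta \<beta>"
  have \<Gamma>: "0 \<le> \<Gamma>" unfolding \<Gamma>_def by (rule Gamma_nonneg[OF \<beta>])
  define K where "K = KK D b"
  have K: "0 < K" unfolding K_def by (rule KK_pos[OF D_pos b_nonneg])
  have D12: "0 < D 1 2" "0 < D 2 2" using D_pos by auto
  define R where "R = D 1 2 + D 2 2"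
  have R: "D 1 2 \<le> R" "D 2 2 \<le> R" "0 < R" unfolding R_def using D12 by auto
  define dm where "dm = min (D 1 2) (D 2 2)"
  have dm: "0 < dm" "dm \<le> D 1 2" "dm \<le> D 2 2" unfolding dm_def using D12 by auto
  define A where "A = \<Gamma> * K * R"
  define B where "B = \<Gamma> * K * (R * R)"
  have A: "0 \<le> A" and B: "0 \<le> B" unfolding A_def B_def using \<Gamma> K R by auto
  define \<Lambda> where "\<Lambda> = min (1 / (4 * (A + 1))) (dm / (B + 1))"
  have \<Lambda>: "0 < \<Lambda>" unfolding \<Lambda>_def using A B dm by auto
  have h1: "\<Gamma> * \<Lambda> * K * R \<le> 1/4"
  proof -
    have "\<Gamma> * \<Lambda> * K * R = A * \<Lambda>" unfolding A_def by simp
    also have "\<dots> \<le> A * (1 / (4 * (A + 1)))" unfolding \<Lambda>_def using A by (intro mult_left_mono) auto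
    also have "\<dots> \<le> 1/4" using A by (simp add: field_simps)
    finally show ?thesis .
  qed
  have h2: "\<Gamma> * \<Lambda> * (K * (R * R)) \<le> dm"
  proof -
    have "\<Gamma> * \<Lambda> * (K * (R * R)) = B * \<Lambda>" unfolding B_def by simp
    also have "\<dots> \<le> B * (dm / (B + 1))" unfolding \<Lambda>_def using B by (intro mult_left_mono) auto
    also have "\<dots> \<le> dm" using B dm by (simp add: field_simps)
    finally show ?thesis .
  qed
  obtain g :: "real \<Rightarrow> real \<times> real" where cg: "continuous_on UNIV g"
    and rng: "\<forall>s. \<forall>j\<in>{1,2::nat}. 0 \<le> vec (g s) j \<and> vec (g s) j \<le> R"
    and geq: "\<forall>l\<in>{0..\<Lambda>}. \<forall>i\<in>{1,2::nat}. vec (g l) i = D i 2 - \<Gamma> * l * II D b \<beta> g i l"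
    using existence[OF D_pos b_nonneg \<beta>(1) \<Gamma> R(1,2) \<Lambda> h1[unfolded K_def]]
      h2[unfolded K_def] dm by force
  define \<Omega> where "\<Omega> l = (\<lambda>j. l * vec (g l) j)" for l
  have sol: "is_solution D b \<beta> \<Lambda> \<Omega>"
    unfolding is_solution_def
  proof (intro conjI ballI)
    fix i :: nat assume i: "i \<in> {1,2}"
    show "continuous_on {0<..\<Lambda>} (\<lambda>l. \<Omega> l i)"
      unfolding \<Omega>_def vec_def
      by (cases "i = 1") (auto intro!: continuous_intros continuous_on_subset[OF cg])
  next
    fix i l assume i: "(i::nat) \<in> {1,2}" and l: "l \<in> {0<..\<Lambda>}"
    show "0 \<le> \<Omega> l i" unfolding \<Omega>_def using rng i l by auto
  next
    fix l i assume l: "l \<in> {0<..\<Lambda>}" and i: "(i::nat) \<in> {1,2}"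
    define F where "F w = DN D b (vec (g (l * (1 - w) powr \<beta>))) i * (\<beta> * w powr (\<beta> - 1))" for w
    have iF: "set_integrable lborel {0<..<1} F"
      unfolding F_def by (rule II_props(1)[OF D_pos b_nonneg \<beta>(1) cg rng i])
    have ide: "integrand D b \<beta> \<Omega> l i w = l\<^sup>2 * F w" if w: "w \<in> {0<..<1}" for w
    proof -
      define p where "p = (1 - w) powr \<beta>"
      have p: "0 < p" unfolding p_def using w by auto
      have q: "(1 - w) powr (2 * \<beta>) = p * p" unfolding p_def using w by (simp add: powr_add[symmetric])
      have "integrand D b \<beta> \<Omega> l i w = (l * p)\<^sup>2 * DN D b (vec (g (l * p))) i / (p * p) * (\<beta> * w powr (\<beta> - 1))"
        unfolding integrand_def \<Omega>_def q p_def[symmetric] DN_scale ..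
      also have "\<dots> = l\<^sup>2 * F w" unfolding F_def p_def[symmetric] using p by (simp add: power2_eq_square field_simps)
      finally show ?thesis .
    qed
    have iI: "set_integrable lborel {0<..<1} (integrand D b \<beta> \<Omega> l i)"
    proof -
      have "set_integrable lborel {0<..<1} (\<lambda>w. l\<^sup>2 * F w)" using iF by simp
      thus ?thesis by (subst set_integrable_cong[OF refl refl ide]) auto
    qed
    have vI: "(LINT w:{0<..<1}|lborel. integrand D b \<beta> \<Omega> l i w) = l\<^sup>2 * II D b \<beta> g i l"
    proof -
      have "(LINT w:{0<..<1}|lborel. integrand D b \<beta> \<Omega> l i w) = (LINT w:{0<..<1}|lborel. l\<^sup>2 * F w)"
        by (rule set_lebesgue_integral_cong) (use ide in auto)
      also have "\<dots> = l\<^sup>2 * II D b \<beta> g i l" unfolding F_def II_def by simp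
      finally show ?thesis .
    qed
    show "set_integrable lborel {0<..<1} (integrand D b \<beta> \<Omega> l i)" by (rule iI)
    have "\<Omega> l i = l * (D i 2 - \<Gamma> * l * II D b \<beta> g i l)" unfolding \<Omega>_def using geq l i by auto
    thus "\<Omega> l i = D i 2 * l - Gamma_beta \<beta> * (LINT w:{0<..<1}|lborel. integrand D b \<beta> \<Omega> l i w)"
      unfolding vI \<Gamma>_def by (simp add: power2_eq_square algebra_simps)
  qed
  have hu: "Gamma_beta \<beta> * KK D b * R * \<Lambda> \<le> 1/2" using h1 unfolding \<Gamma>_def K_def by (simp add: algebra_simps)
  show ?thesis
  proof (intro exI conjI allI impI)
    show "0 < \<Lambda>" by (rule \<Lambda>)
    show "is_solution D b \<beta> \<Lambda> \<Omega>" by (rule sol)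
    fix \<Omega>' assume s': "is_solution D b \<beta> \<Lambda> \<Omega>'"
    show "\<forall>l\<in>{0<..\<Lambda>}. \<forall>i\<in>{1,2}. \<Omega>' l i = \<Omega> l i"
      by (rule uniq[OF D_pos b_nonneg \<beta>(1) \<Gamma>[unfolded \<Gamma>_def] R(1,2) hu s' sol])
  qed
qed


end
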